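(* Consider $d=2$ with either weak or strong coupling (see context). Let $\gamma\in(0,1/10)$ and let $\mathcal{M}_\gamma$ be a set as in the context. Then for every (sufficiently large) $m\in\mathcal{M}_\gamma$ there exists a new eigenvalue $\lambda\in\Lambda$ with $|\lambda-m|\le\gamma$ and $$H_m'(\lambda)\le (1+O(\gamma))\,\frac{r_2(m)}{(m-\lambda)^2},$$ where the implied constant in $O(\gamma)$ is absolute (as $\gamma\to0$).
   Context: For an integer $n$, $r_2(n)=\#\{\xi\in\mathbb{Z}^2:|\xi|^2=n\}$, $\mathcal{N}_2=\{n:r_2(n)>0\}$, and $n_+(\lambda)$ is the smallest element of $\mathcal{N}_2$ larger than $\lambda$. Fix $C\in\mathbb{R}$ and (for strong coupling) $\eta\in(131/146,1)$. Let $I(\lambda)=\mathcal{N}_2$ (weak coupling) or $I(\lambda)=\mathcal{N}_2\cap[n_+(\lambda)-n_+(\lambda)^\eta,\,n_+(\lambda)+n_+(\lambda)^\eta]$ (strong coupling). The set $\Lambda$ of new eigenvalues is the set of real $\lambda\notin\mathcal{N}_2$ solving $\sum_{n\in I(\lambda)}r_2(n)\big(\frac{1}{n-\lambda}-\frac{n}{n^2+1}\big)=C$ (with strict inequality $|n-n_+(\lambda)|<n_+(\lambda)^\eta$ in the strong coupling window). For $m\in\mathcal{N}_2$, $H_m'(\lambda):=\sum_{n\in I(\lambda)\setminus\{m\}}\frac{r_2(n)}{(n-\lambda)^2}$. $\mathcal{M}_\gamma\subset\mathcal{N}_2$ is an infinite set each of whose elements has the form $m=n^2+1$ with $n$ a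 positive integer, $r_2(m)\le32$ and $r_2(m+3)\ge10\,r_2(m)/\gamma^2$. *)

theory Defs
  imports "HOL-Analysis.Analysis"
begin

definition r2 :: "nat \<Rightarrow> nat" where
  "r2 n = card {p :: int \<times> int. (fst p)\<^sup>2 + (snd p)\<^sup>2 = int n}"

definition N2 :: "nat set" where
  "N2 = {n. r2 n > 0}"

definition nplus :: "real \<Rightarrow> nat" where
  "nplus lam = (LEAST n. n \<in> N2 \<and> real n > lam)"

datatype coupling = Weak | Strong

definition Iset :: "coupling \<Rightarrow> real \<Rightarrow> real \<Rightarrow> nat set" where
  "Iset cpl eta lam = (case cpl of
      Weak \<Rightarrow> N2
    | Strong \<Rightarrow> {n \<in> N2. \<bar>real n - real (nplus lam)\<bar> < real (nplus lam) powr eta})"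

definition NewEig :: "coupling \<Rightarrow> real \<Rightarrow> real \<Rightarrow> real set" where
  "NewEig cpl eta C = {lam. lam \<notin> real ` N2 \<and>
     (\<Sum>\<^sub>\<infinity> n \<in> Iset cpl eta lam.
        real (r2 n) * (1 / (real n - lam) - real n / ((real n)\<^sup>2 + 1))) = C}"

definition Hderiv :: "coupling \<Rightarrow> real \<Rightarrow> nat \<Rightarrow> real \<Rightarrow> real" where
  "Hderiv cpl eta m lam =
     (\<Sum>\<^sub>\<infinity> n \<in> Iset cpl eta lam - {m}. real (r2 n) / (real n - lam)\<^sup>2)"

definition is_M_gamma :: "real \<Rightarrow> nat set \<Rightarrow> bool" where
  "is_M_gamma gamma M \<longleftrightarrow> M \<subseteq> N2 \<and> infinite M \<and>
     (\<forall>m \<in> M. (\<exists>n::nat. n > 0 \<and> m = n\<^sup>2 + 1) \<and> r2 m \<le> 32 \<and>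
        real (r2 (m + 3)) \<ge> 10 * real (r2 m) / gamma\<^sup>2)"

end

theory Submission
  imports Defs
begin


lemma r2_bound: "real (r2 n) \<le> 4 * sqrt (real n) + 2"
proof -
  define P where "P = {p :: int \<times> int. (fst p)\<^sup>2 + (snd p)\<^sup>2 = int n}"
  define k where "k = \<lfloor>sqrt (real n)\<rfloor>"
  have k0: "k \<ge> 0" unfolding k_def by simp
  have bnd: "\<bar>a\<bar> \<le> k" if "a\<^sup>2 \<le> int n" for a :: int
  proof -
    have "real_of_int (a\<^sup>2) \<le> real n" using that by (metis of_int_le_iff of_int_of_nat_eq)
    hence "sqrt (real_of_int (a\<^sup>2)) \<le> sqrt (real n)" by (rule real_sqrt_le_mono)
    hence "real_of_int \<bar>a\<bar> \<le> sqrt (real n)" by simp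
    thus ?thesis unfolding k_def by (simp add: le_floor_iff)
  qed
  have sub: "(\<lambda>p. (fst p, snd p \<ge> 0)) ` P \<subseteq> {-k..k} \<times> (UNIV :: bool set)"
  proof
    fix q assume "q \<in> (\<lambda>p. (fst p, snd p \<ge> 0)) ` P"
    then obtain a b where ab: "(a,b) \<in> P" "q = (a, b \<ge> 0)" by auto
    have "a\<^sup>2 + b\<^sup>2 = int n" using ab(1) unfolding P_def by simp
    hence "a\<^sup>2 \<le> int n" using zero_le_power2[of b] by linarith
    from bnd[OF this] show "q \<in> {-k..k} \<times> UNIV" using ab by auto
  qed
  have inj: "inj_on (\<lambda>p. (fst p, snd p \<ge> 0)) P"
  proof (rule inj_onI)
    fix p q assume pq: "p \<in> P" "q \<in> P" "(fst p, snd p \<ge> 0) = (fst q, snd q \<ge> 0)"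
    hence f: "fst p = fst q" and s: "(snd p \<ge> 0) = (snd q \<ge> 0)" by auto
    have "(snd p)\<^sup>2 = (snd q)\<^sup>2" using pq(1,2) f unfolding P_def by auto
    hence "snd p = snd q \<or> snd p = - snd q" by (simp add: power2_eq_iff)
    hence "snd p = snd q" using s by auto
    thus "p = q" using f by (simp add: prod_eq_iff)
  qed
  have fin: "finite ({-k..k} \<times> (UNIV :: bool set))" by simp
  have "card P = card ((\<lambda>p. (fst p, snd p \<ge> 0)) ` P)" using inj by (simp add: card_image)
  also have "\<dots> \<le> card ({-k..k} \<times> (UNIV :: bool set))" by (rule card_mono[OF fin sub])
  also have "\<dots> = nat (2*k+1) * 2" by (simp add: card_cartesian_product)
  finally have c: "card P \<le> nat (2*k+1) * 2" .
  have "r2 n = card P" unfolding r2_def P_def by simp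
  hence "real (r2 n) \<le> real (nat (2*k+1) * 2)" using c by simp
  also have "\<dots> = (2 * real_of_int k + 1) * 2" using k0 by simp
  also have "\<dots> \<le> (2 * sqrt (real n) + 1) * 2" unfolding k_def by simp
  finally show ?thesis by simp
qed

lemma r2_bound6: "n \<ge> 1 \<Longrightarrow> real (r2 n) \<le> 6 * sqrt (real n)"
proof -
  assume "n \<ge> 1"
  hence "1 \<le> sqrt (real n)" by simp
  thus ?thesis using r2_bound[of n] by linarith
qed

lemma summable_Q: "summable (\<lambda>n::nat. sqrt (real n) / (real n)^2)"
proof -
  have "summable (\<lambda>n::nat. real n powr (-3/2))" by (subst summable_real_powr_iff) auto
  moreover have "real n powr (-3/2) = sqrt (real n) / (real n)^2" for n :: nat
  proof (cases "n = 0")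
    case False
    hence p: "real n > 0" by simp
    have e1: "sqrt (real n) = real n powr (1/2)" by (simp add: powr_half_sqrt)
    have e2: "(real n)^2 = real n powr 2" using p by (simp add: powr_numeral)
    have "sqrt (real n) / (real n)^2 = real n powr (1/2) / real n powr 2"
      by (simp only: e1 e2)
    also have "\<dots> = real n powr (1/2 - 2)" by (rule powr_diff[symmetric])
    finally show ?thesis by simp
  qed simp
  ultimately show ?thesis by simp
qed

lemma summable_by_Q:
  fixes f :: "nat \<Rightarrow> real"
  assumes "\<And>n. n \<ge> N \<Longrightarrow> \<bar>f n\<bar> \<le> c * (sqrt (real n) / (real n)^2)"
  shows "f summable_on A"
proof -
  have "summable (\<lambda>n. c * (sqrt (real n) / (real n)^2))"
    using summable_Q by (rule summable_mult)
  hence "summable (\<lambda>n. norm (f n))"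
    by (rule summable_comparison_test') (use assms in auto)
  hence "f summable_on UNIV" by (rule norm_summable_imp_summable_on)
  thus ?thesis by (rule summable_on_subset_banach) auto
qed

definition tm :: "nat \<Rightarrow> real \<Rightarrow> real" where
  "tm n x = real (r2 n) * (1 / (real n - x) - real n / ((real n)\<^sup>2 + 1))"

definition pq :: "nat \<Rightarrow> real \<Rightarrow> real \<Rightarrow> real" where
  "pq n x y = real (r2 n) / ((real n - x) * (real n - y))"

lemma summable_pq: "(\<lambda>n. pq n x y) summable_on A"
proof (rule summable_by_Q[where N = "nat \<lceil>2*(\<bar>x\<bar>+\<bar>y\<bar>) + 2\<rceil>" and c = 24])
  fix n :: nat assume "n \<ge> nat \<lceil>2*(\<bar>x\<bar>+\<bar>y\<bar>) + 2\<rceil>"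
  hence nb: "real n \<ge> 2*(\<bar>x\<bar>+\<bar>y\<bar>) + 2" by linarith
  have n1: "n \<ge> 1"
  proof -
    have "real n \<ge> 2" using nb abs_ge_zero[of x] abs_ge_zero[of y] by (smt (verit))
    thus ?thesis by simp
  qed
  have hx: "real n - x \<ge> real n / 2" and hy: "real n - y \<ge> real n / 2" using nb by auto
  have np: "real n > 0" using n1 by simp
  have "real n / 2 * (real n / 2) \<le> (real n - x) * (real n - y)"
    by (rule mult_mono) (use hx hy np in auto)
  hence den: "(real n)^2 / 4 \<le> (real n - x) * (real n - y)" by (simp add: power2_eq_square)
  have dpos: "(real n)^2 / 4 > 0" using np by simp
  have dp: "(real n - x) * (real n - y) > 0" using den dpos by linarith
  have "\<bar>pq n x y\<bar> = real (r2 n) / ((real n - x) * (real n - y))"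
    unfolding pq_def using dp by (simp add: abs_divide)
  also have "\<dots> \<le> real (r2 n) / ((real n)^2 / 4)"
    by (rule divide_left_mono[OF den]) (use mult_pos_pos[OF dp dpos] in auto)
  also have "\<dots> \<le> 6 * sqrt (real n) / ((real n)^2 / 4)"
    by (rule divide_right_mono) (use r2_bound6[OF n1] dpos in auto)
  also have "\<dots> = 24 * (sqrt (real n) / (real n)^2)" by simp
  finally show "\<bar>pq n x y\<bar> \<le> 24 * (sqrt (real n) / (real n)^2)" .
qed

lemma tm_alt: "real n \<noteq> x \<Longrightarrow> tm n x = real (r2 n) * ((1 + real n * x) / ((real n - x) * ((real n)^2 + 1)))"
proof -
  assume a: "real n \<noteq> x"
  have b: "(real n)^2 + 1 \<noteq> 0" by (metis add_nonneg_pos zero_le_power2 zero_less_one less_irrefl)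
  have c: "real n - x \<noteq> 0" using a by simp
  show ?thesis unfolding tm_def using b c
    by (simp add: field_simps power2_eq_square)
qed

lemma summable_tm: "(\<lambda>n. tm n x) summable_on A"
proof (rule summable_by_Q[where N = "nat \<lceil>2*\<bar>x\<bar> + 2\<rceil>" and c = "12 * (1 + \<bar>x\<bar>)"])
  fix n :: nat assume "n \<ge> nat \<lceil>2*\<bar>x\<bar> + 2\<rceil>"
  hence nb: "real n \<ge> 2*\<bar>x\<bar> + 2" by linarith
  have n1: "n \<ge> 1"
  proof -
    have "real n \<ge> 2" using nb abs_ge_zero[of x] by linarith
    thus ?thesis by simp
  qed
  have np: "real n > 0" using n1 by simp
  have hx: "real n - x \<ge> real n / 2" using nb by auto
  have ne: "real n \<noteq> x" using hx np by auto
  have num: "\<bar>1 + real n * x\<bar> \<le> real n * (1 + \<bar>x\<bar>)"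
  proof -
    have "\<bar>1 + real n * x\<bar> \<le> 1 + real n * \<bar>x\<bar>" by (simp add: abs_mult abs_triangle_ineq[THEN order_trans])
    also have "\<dots> \<le> real n + real n * \<bar>x\<bar>" using n1 by simp
    finally show ?thesis by (simp add: algebra_simps)
  qed
  have den: "real n / 2 * (real n)^2 \<le> (real n - x) * ((real n)^2 + 1)"
    by (rule mult_mono) (use hx np in auto)
  have dpos: "real n / 2 * (real n)^2 > 0" using np by simp
  have dp: "(real n - x) * ((real n)^2 + 1) > 0" using hx np by (simp add: add_pos_nonneg)
  have "\<bar>tm n x\<bar> = real (r2 n) * (\<bar>1 + real n * x\<bar> / \<bar>(real n - x) * ((real n)^2 + 1)\<bar>)"
    unfolding tm_alt[OF ne] by (simp add: abs_mult abs_divide)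
  also have "\<dots> = real (r2 n) * (\<bar>1 + real n * x\<bar> / ((real n - x) * ((real n)^2 + 1)))"
    using dp by simp
  also have "\<dots> \<le> real (r2 n) * (real n * (1 + \<bar>x\<bar>) / (real n / 2 * (real n)^2))"
    apply (rule mult_left_mono) apply (rule frac_le) using num den dpos by auto
  also have "\<dots> \<le> 6 * sqrt (real n) * (real n * (1 + \<bar>x\<bar>) / (real n / 2 * (real n)^2))"
    apply (rule mult_right_mono) using r2_bound6[OF n1] dpos np by (auto intro!: divide_nonneg_pos)
  also have "\<dots> = 12 * (1 + \<bar>x\<bar>) * (sqrt (real n) / (real n)^2)"
    using np by (simp add: field_simps power2_eq_square)
  finally show "\<bar>tm n x\<bar> \<le> 12 * (1 + \<bar>x\<bar>) * (sqrt (real n) / (real n)^2)" .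
qed



lemma divle_aux: "0 < (P::real) \<Longrightarrow> 0 < L \<Longrightarrow> c * P \<le> L \<Longrightarrow> c / L \<le> 1 / P"
  by (simp add: divide_simps mult.commute)

lemma prodlb:
  fixes d p q g :: real
  assumes "\<bar>d\<bar> \<ge> 1" "\<bar>p\<bar> \<le> g" "\<bar>q\<bar> \<le> g" "g \<le> 1/2"
  shows "(\<bar>d\<bar> - g)^2 \<le> (d - p) * (d - q)"
proof (cases "d \<ge> 0")
  case True
  have "(d - g) * (d - g) \<le> (d - p) * (d - q)"
    by (rule mult_mono) (use assms True in auto)
  thus ?thesis using True by (simp add: power2_eq_square)
next
  case False
  have "(-d - g) * (-d - g) \<le> (p - d) * (q - d)"
    by (rule mult_mono) (use assms False in auto)
  thus ?thesis using False by (simp add: power2_eq_square algebra_simps)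
qed

lemma term_facts:
  fixes n m :: nat and x y l g :: real
  assumes nm: "n \<noteq> m" and g: "0 < g" "g \<le> 1/10"
    and x: "\<bar>x - real m\<bar> \<le> g" and y: "\<bar>y - real m\<bar> \<le> g" and l: "\<bar>l - real m\<bar> \<le> g"
  shows "pq n x y \<ge> 0"
    and "((1-g)/(1+g))^2 * (real (r2 n) / (real n - l)^2) \<le> pq n x y"
    and "pq n x y \<le> 4 * real (r2 n) / (real n - real m)^2"
proof -
  define d where "d = real n - real m"
  have d1: "\<bar>d\<bar> \<ge> 1" unfolding d_def using nm by (cases "n < m") auto
  have e: "(real n - x) * (real n - y) = (d - (x - m)) * (d - (y - m))" unfolding d_def by simp
  have lb: "(\<bar>d\<bar> - g)^2 \<le> (real n - x) * (real n - y)"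
    unfolding e by (rule prodlb) (use d1 x y g in auto)
  have pos0: "\<bar>d\<bar> - g > 0" using d1 g by simp
  have pos: "(real n - x) * (real n - y) > 0" using lb pos0
    by (smt (verit) zero_less_power)
  show "pq n x y \<ge> 0" unfolding pq_def using pos by simp
  have ub: "(real n - x) * (real n - y) \<le> (\<bar>d\<bar> + g)^2"
  proof -
    have "(real n - x) * (real n - y) \<le> \<bar>real n - x\<bar> * \<bar>real n - y\<bar>"
      by (metis abs_ge_self abs_mult)
    also have "\<dots> \<le> (\<bar>d\<bar> + g) * (\<bar>d\<bar> + g)"
      by (rule mult_mono) (use x y g in \<open>auto simp: d_def\<close>)
    finally show ?thesis by (simp add: power2_eq_square)
  qed
  have ln: "(\<bar>d\<bar> - g)^2 \<le> (real n - l)^2"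
  proof -
    have "\<bar>d\<bar> - g \<le> \<bar>real n - l\<bar>" unfolding d_def using l by linarith
    hence "(\<bar>d\<bar> - g)^2 \<le> \<bar>real n - l\<bar>^2" by (rule power_mono) (use pos0 in simp)
    thus ?thesis by simp
  qed
  have lpos: "(real n - l)^2 > 0" using ln pos0 by (smt (verit) zero_less_power)
  have key: "(\<bar>d\<bar> + g) * (1 - g) \<le> (\<bar>d\<bar> - g) * (1 + g)" using d1 g
    by (simp add: algebra_simps)
  have key2: "((1-g)/(1+g))^2 * (\<bar>d\<bar> + g)^2 \<le> (\<bar>d\<bar> - g)^2"
  proof -
    have "(1-g)/(1+g) * (\<bar>d\<bar> + g) \<le> \<bar>d\<bar> - g"
      using key g by (simp add: field_simps)
    moreover have "0 \<le> (1-g)/(1+g) * (\<bar>d\<bar> + g)" using g by simp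
    ultimately have "((1-g)/(1+g) * (\<bar>d\<bar> + g))^2 \<le> (\<bar>d\<bar> - g)^2"
      by (rule power_mono)
    thus ?thesis by (simp only: power_mult_distrib)
  qed
  have cpos: "((1-g)/(1+g))^2 \<ge> 0" by simp
  have "((1-g)/(1+g))^2 * (real (r2 n) / (real n - l)^2)
      = real (r2 n) * (((1-g)/(1+g))^2 / (real n - l)^2)" by simp
  also have "\<dots> \<le> real (r2 n) * (1 / ((real n - x) * (real n - y)))"
  proof (rule mult_left_mono)
    have "((1-g)/(1+g))^2 * ((real n - x) * (real n - y)) \<le> ((1-g)/(1+g))^2 * (\<bar>d\<bar> + g)^2"
      by (rule mult_left_mono[OF ub cpos])
    also have "\<dots> \<le> (\<bar>d\<bar> - g)^2" by (rule key2)
    also have "\<dots> \<le> (real n - l)^2" by (rule ln)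
    finally have h: "((1-g)/(1+g))^2 * ((real n - x) * (real n - y)) \<le> (real n - l)^2" .
    show "((1-g)/(1+g))^2 / (real n - l)^2 \<le> 1 / ((real n - x) * (real n - y))"
      by (rule divle_aux[OF pos lpos h])
  qed simp
  also have "\<dots> = pq n x y" unfolding pq_def by simp
  finally show "((1-g)/(1+g))^2 * (real (r2 n) / (real n - l)^2) \<le> pq n x y" .
  have q: "d^2 / 4 \<le> (real n - x) * (real n - y)"
  proof -
    have "\<bar>d\<bar> / 2 \<le> \<bar>d\<bar> - g" using d1 g by linarith
    hence "(\<bar>d\<bar>/2)^2 \<le> (\<bar>d\<bar> - g)^2" by (rule power_mono) (use d1 in simp)
    hence "d^2/4 \<le> (\<bar>d\<bar> - g)^2" by (simp add: power_divide)
    thus ?thesis using lb by linarith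
  qed
  have d2: "d^2 / 4 > 0" using d1 by auto
  have "pq n x y \<le> real (r2 n) / (d^2/4)" unfolding pq_def
    by (rule divide_left_mono[OF q]) (use mult_pos_pos[OF pos d2] in auto)
  thus "pq n x y \<le> 4 * real (r2 n) / (real n - real m)^2" unfolding d_def by (simp add: mult.commute)
qed



definition Fs :: "nat set \<Rightarrow> real \<Rightarrow> real" where
  "Fs S x = infsum (\<lambda>n. tm n x) S"
definition gs :: "nat set \<Rightarrow> nat \<Rightarrow> real \<Rightarrow> real" where
  "gs S m x = infsum (\<lambda>n. tm n x) (S - {m})"
definition Dq :: "nat set \<Rightarrow> nat \<Rightarrow> real \<Rightarrow> real \<Rightarrow> real" where
  "Dq S m x y = infsum (\<lambda>n. pq n x y) (S - {m})"
definition Hs :: "nat set \<Rightarrow> nat \<Rightarrow> real \<Rightarrow> real" where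
  "Hs S m x = infsum (\<lambda>n. real (r2 n) / (real n - x)^2) (S - {m})"

lemma summable_H: "(\<lambda>n. real (r2 n) / (real n - x)^2) summable_on A"
proof -
  have "(\<lambda>n. pq n x x) summable_on A" by (rule summable_pq)
  moreover have "pq n x x = real (r2 n) / (real n - x)^2" for n
    unfolding pq_def by (simp add: power2_eq_square)
  ultimately show ?thesis by simp
qed

lemma Fs_split: "m \<in> S \<Longrightarrow> Fs S x = tm m x + gs S m x"
proof -
  assume "m \<in> S"
  hence "S = insert m (S - {m})" by auto
  hence "Fs S x = infsum (\<lambda>n. tm n x) (insert m (S - {m}))" unfolding Fs_def by simp
  also have "\<dots> = tm m x + gs S m x" unfolding gs_def
    by (rule infsum_insert) (auto intro: summable_tm)
  finally show ?thesis .
qed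

lemma tm_diff: "real n \<noteq> x \<Longrightarrow> real n \<noteq> y \<Longrightarrow> tm n y - tm n x = (y - x) * pq n x y"
  unfolding tm_def pq_def by (simp add: field_simps)

lemma gs_diff:
  assumes "\<bar>x - real m\<bar> < 1" "\<bar>y - real m\<bar> < 1"
  shows "gs S m y - gs S m x = (y - x) * Dq S m x y"
proof -
  have ne: "real n \<noteq> x" "real n \<noteq> y" if "n \<in> S - {m}" for n
  proof -
    have "n \<noteq> m" using that by auto
    hence "\<bar>real n - real m\<bar> \<ge> 1" by (cases "n < m") auto
    thus "real n \<noteq> x" "real n \<noteq> y" using assms by auto
  qed
  have "gs S m y - gs S m x = infsum (\<lambda>n. tm n y + (- tm n x)) (S - {m})"
    unfolding gs_def
    by (subst infsum_add) (auto intro: summable_tm simp: summable_on_uminus infsum_uminus)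
  also have "\<dots> = infsum (\<lambda>n. (y - x) * pq n x y) (S - {m})"
    by (rule infsum_cong) (use tm_diff ne in auto)
  also have "\<dots> = (y - x) * Dq S m x y" unfolding Dq_def
    by (rule infsum_cmult_right) (rule summable_pq)
  finally show ?thesis .
qed

context
  fixes S :: "nat set" and m :: nat and g :: real
  assumes g: "0 < g" "g \<le> 1/10"
begin

lemma Dq_nonneg: "\<bar>x - real m\<bar> \<le> g \<Longrightarrow> \<bar>y - real m\<bar> \<le> g \<Longrightarrow> Dq S m x y \<ge> 0"
  unfolding Dq_def by (rule infsum_nonneg) (use term_facts(1) g in auto)

lemma Dq_upper: "\<bar>x - real m\<bar> \<le> g \<Longrightarrow> \<bar>y - real m\<bar> \<le> g \<Longrightarrow> Dq S m x y \<le> 4 * Hs S m (real m)"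
proof -
  assume x: "\<bar>x - real m\<bar> \<le> g" and y: "\<bar>y - real m\<bar> \<le> g"
  have "Dq S m x y \<le> infsum (\<lambda>n. 4 * (real (r2 n) / (real n - real m)^2)) (S - {m})"
    unfolding Dq_def
    apply (rule infsum_mono)
    subgoal by (rule summable_pq)
    subgoal by (rule summable_on_cmult_right[OF summable_H])
    subgoal for n using term_facts(3)[of n m g x y] g x y by simp
    done
  also have "\<dots> = 4 * Hs S m (real m)" unfolding Hs_def
    by (rule infsum_cmult_right) (rule summable_H)
  finally show ?thesis .
qed

lemma Dq_lowerH: "\<bar>x - real m\<bar> \<le> g \<Longrightarrow> \<bar>y - real m\<bar> \<le> g \<Longrightarrow> \<bar>l - real m\<bar> \<le> g \<Longrightarrow>
   ((1-g)/(1+g))^2 * Hs S m l \<le> Dq S m x y"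
proof -
  assume x: "\<bar>x - real m\<bar> \<le> g" and y: "\<bar>y - real m\<bar> \<le> g" and l: "\<bar>l - real m\<bar> \<le> g"
  have "((1-g)/(1+g))^2 * Hs S m l = infsum (\<lambda>n. ((1-g)/(1+g))^2 * (real (r2 n) / (real n - l)^2)) (S - {m})"
    unfolding Hs_def by (rule infsum_cmult_right[symmetric]) (rule summable_H)
  also have "\<dots> \<le> Dq S m x y" unfolding Dq_def
    apply (rule infsum_mono)
    subgoal by (rule summable_on_cmult_right[OF summable_H])
    subgoal by (rule summable_pq)
    subgoal for n using term_facts(2)[of n m g x y l] g x y l by simp
    done
  finally show ?thesis .
qed

lemma Dq_lower3:
  assumes "m + 3 \<in> S" "\<bar>x - real m\<bar> \<le> g" "\<bar>y - real m\<bar> \<le> g"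
  shows "real (r2 (m+3)) / (3 + g)^2 \<le> Dq S m x y"
proof -
  have "pq (m+3) x y \<le> Dq S m x y"
  proof -
    have "infsum (\<lambda>n. pq n x y) {m+3} \<le> infsum (\<lambda>n. pq n x y) (S - {m})"
      by (rule infsum_mono_neutral) (use assms term_facts(1)[OF _ g assms(2,3)] in \<open>auto intro: summable_pq\<close>)
    thus ?thesis unfolding Dq_def by simp
  qed
  moreover have "real (r2 (m+3)) / (3 + g)^2 \<le> pq (m+3) x y"
  proof -
    have a: "0 < real (m+3) - x" "0 < real (m+3) - y" using assms g by auto
    have b: "(real (m+3) - x) * (real (m+3) - y) \<le> (3+g) * (3+g)"
      by (rule mult_mono) (use assms g in auto)
    have "real (r2 (m+3)) / ((3 + g) * (3+g)) \<le> real (r2 (m+3)) / ((real (m+3) - x) * (real (m+3) - y))"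
      by (rule divide_left_mono[OF b]) (use a g in auto)
    thus ?thesis unfolding pq_def by (simp add: power2_eq_square)
  qed
  ultimately show ?thesis by linarith
qed

lemma gs_cont: "continuous_on {real m - g .. real m + g} (gs S m)"
proof -
  have "lipschitz_on (4 * Hs S m (real m)) {real m - g .. real m + g} (gs S m)"
  proof (rule lipschitz_onI)
    show "0 \<le> 4 * Hs S m (real m)" using Dq_nonneg[of "real m" "real m"] Dq_upper[of "real m" "real m"] g by simp
  next
    fix x y assume x: "x \<in> {real m - g .. real m + g}" and y: "y \<in> {real m - g .. real m + g}"
    have x': "\<bar>x - real m\<bar> \<le> g" and y': "\<bar>y - real m\<bar> \<le> g" using x y by auto
    have "dist (gs S m x) (gs S m y) = \<bar>gs S m y - gs S m x\<bar>" by (simp add: dist_real_def abs_minus_commute)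
    also have "\<dots> = \<bar>y - x\<bar> * Dq S m x y" using gs_diff[of x m y S] x' y' g Dq_nonneg[OF x' y']
      by (simp add: abs_mult)
    also have "\<dots> \<le> \<bar>y - x\<bar> * (4 * Hs S m (real m))"
      by (rule mult_left_mono[OF Dq_upper[OF x' y']]) simp
    finally show "dist (gs S m x) (gs S m y) \<le> 4 * Hs S m (real m) * dist x y"
      by (simp add: dist_real_def abs_minus_commute mult.commute)
  qed
  thus ?thesis by (rule lipschitz_on_continuous_on)
qed

end



lemma poly_ineq: "0 < (g::real) \<Longrightarrow> g \<le> 1/10 \<Longrightarrow> (1 + g/10) * (1+g)^2 \<le> (1 + 6*g) * (1-g)^2"
proof -
  assume g: "0 < g" "g \<le> 1/10"
  have e: "(1 + 6*g) * (1-g)^2 - (1 + g/10) * (1+g)^2 = g * ((19/10 - 122/10 * g) + 59/10 * g^2)"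
    by (simp add: power2_eq_square algebra_simps)
  have "19/10 - 122/10 * g > 0" using g by simp
  moreover have "59/10 * g^2 \<ge> 0" by simp
  ultimately have "g * ((19/10 - 122/10 * g) + 59/10 * g^2) \<ge> 0" using g by simp
  thus ?thesis using e by linarith
qed

lemma final_bound:
  fixes g r u D H :: real
  assumes g: "0 < g" "g \<le> 1/10" and r: "r \<ge> 1" and u: "0 < u" "u \<le> g"
    and D: "D * u^2 \<le> r + u/10" and H: "((1-g)/(1+g))^2 * H \<le> D"
  shows "H \<le> (1 + 6*g) * r / u^2"
proof -
  define c where "c = ((1-g)/(1+g))^2"
  have cpos: "c > 0" unfolding c_def using g by simp
  have u2: "u^2 > 0" using u by simp
  have "c * H * u^2 \<le> D * u^2" using H u2 unfolding c_def by (simp add: mult_right_mono)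
  also have "\<dots> \<le> r + u/10" by (rule D)
  also have "\<dots> \<le> r * (1 + g/10)"
  proof -
    have "g * 1 \<le> g * r" using r g by (intro mult_left_mono) auto
    hence "u \<le> g * r" using u by linarith
    thus ?thesis by (simp add: algebra_simps)
  qed
  finally have h1: "c * H * u^2 \<le> r * (1 + g/10)" .
  have "c * ((1 + 6*g) * r) \<ge> r * (1 + g/10)"
  proof -
    have h: "(1 + g/10) \<le> (1 + 6*g) * c"
      using poly_ineq[OF g] g unfolding c_def by (simp add: power_divide field_simps)
    have "r * (1 + g/10) \<le> r * ((1 + 6*g) * c)" by (rule mult_left_mono[OF h]) (use r in simp)
    thus ?thesis by (simp add: mult_ac)
  qed
  hence "c * H * u^2 \<le> c * ((1 + 6*g) * r)" using h1 by linarith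
  hence "H * u^2 \<le> (1 + 6*g) * r" using cpos by (simp add: mult.assoc)
  thus ?thesis using u2 by (simp add: field_simps)
qed



context
  fixes S :: "nat set" and m :: nat and g C :: real
  assumes g: "0 < g" "g < 1/10" and mS: "m \<in> S" and m3: "m + 3 \<in> S"
    and r1: "real (r2 m) \<ge> 1" and big: "real (r2 (m+3)) \<ge> 10 * real (r2 m) / g^2"
begin

lemma g': "0 < g" "g \<le> 1/10" using g by auto

lemma formE:
  assumes x: "\<bar>x - real m\<bar> \<le> g"
  shows "Fs S x - C = real (r2 m) / (real m - x) + (Fs S m - C) + (x - real m) * Dq S m (real m) x"
proof -
  have "gs S m x - gs S m (real m) = (x - real m) * Dq S m (real m) x"
    by (rule gs_diff) (use x g in auto)
  moreover have "tm m x - tm m (real m) = real (r2 m) / (real m - x)"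
    unfolding tm_def by (simp add: algebra_simps)
  ultimately show ?thesis using Fs_split[OF mS, of x] Fs_split[OF mS, of "real m"] by linarith
qed

lemma Dbig:
  assumes x: "\<bar>x - real m\<bar> \<le> g"
  shows "g * Dq S m (real m) x \<ge> real (r2 m) / g + 1/10"
proof -
  let ?r = "real (r2 m)" and ?D = "Dq S m (real m) x"
  have D3: "real (r2 (m+3)) / (3 + g)^2 \<le> ?D" by (rule Dq_lower3[OF g' m3]) (use x g in auto)
  have q: "(3+g)^2 \<le> 961/100"
  proof -
    have "(3+g)*(3+g) \<le> (31/10)*(31/10)" by (rule mult_mono) (use g in auto)
    thus ?thesis by (simp add: power2_eq_square)
  qed
  have qp: "(3+g)^2 > 0" using g by simp
  have "10 * ?r / g^2 / (961/100) \<le> real (r2 (m+3)) / (3 + g)^2"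
    by (rule frac_le) (use big q qp g in auto)
  hence "1000 * ?r / (961 * g^2) \<le> ?D" using D3 by simp
  hence "g * (1000 * ?r / (961 * g^2)) \<le> g * ?D" using g by (intro mult_left_mono) auto
  hence h: "1000 * ?r / (961 * g) \<le> g * ?D" using g by (simp add: power2_eq_square)
  have "?r / g + 1/10 \<le> 1000 * ?r / (961 * g)"
  proof -
    have "?r / g \<ge> 10" using r1 g by (simp add: field_simps)
    hence "39 * (?r / g) \<ge> 961/10" by simp
    thus ?thesis using g by (simp add: field_simps)
  qed
  thus ?thesis using h by linarith
qed

lemma Fcont: "continuous_on {a..b} (Fs S)" if "real m - g \<le> a" "b \<le> real m + g" "real m \<notin> {a..b}"
proof -
  have "continuous_on {a..b} (\<lambda>x. tm m x + gs S m x)"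
  proof (intro continuous_intros)
    show "continuous_on {a..b} (gs S m)"
      by (rule continuous_on_subset[OF gs_cont[OF g']]) (use that in auto)
    show "continuous_on {a..b} (\<lambda>x. tm m x)" unfolding tm_def
      by (intro continuous_intros) (use that in auto)
  qed
  moreover have "Fs S x = tm m x + gs S m x" for x by (rule Fs_split[OF mS])
  ultimately show ?thesis by simp
qed

lemma right_side:
  assumes a: "Fs S (real m) - C \<ge> -1/10"
  shows "\<exists>l. real m < l \<and> l \<le> real m + g \<and> Fs S l = C \<and> Hs S m l \<le> (1 + 6*g) * real (r2 m) / (real m - l)^2"
proof -
  define r where "r = real (r2 m)"
  define a where "a = Fs S (real m) - C"
  define B where "B = 4 * Hs S m (real m)"
  have B0: "B \<ge> 0" unfolding B_def
    using Dq_nonneg[OF g', where x="real m" and y="real m" and S=S and m=m] Dq_upper[OF g', where x="real m" and y="real m" and S=S and m=m] g by simp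
  define s where "s = min (g/2) (r / (2 * (\<bar>a\<bar> + g * B + 1)))"
  have gB: "0 \<le> g * B" using g B0 by simp
  have den: "2 * (\<bar>a\<bar> + g * B + 1) > 0" using B0 g by (simp add: add_nonneg_pos)
  have r0: "r \<ge> 1" using r1 unfolding r_def .
  have s0: "s > 0" unfolding s_def using g den r0 by simp
  have sg: "s \<le> g/2" unfolding s_def by (rule min.cobounded1)
  have s2: "s \<le> r / (2 * (\<bar>a\<bar> + g * B + 1))" unfolding s_def by simp
  have rs: "r / s \<ge> 2 * (\<bar>a\<bar> + g * B + 1)" using s2 s0 den by (simp add: field_simps)
  have lowF: "Fs S (real m + s) \<le> C"
  proof -
    have x: "\<bar>real m + s - real m\<bar> \<le> g" using s0 sg g by simp
    have E: "Fs S (real m + s) - C = - (r / s) + a + s * Dq S m (real m) (real m + s)"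
      using formE[OF x] unfolding r_def a_def by simp
    have "s * Dq S m (real m) (real m + s) \<le> g * B"
      unfolding B_def
      by (rule mult_mono) (use sg g s0 Dq_upper[OF g', where x="real m" and y="real m + s" and S=S and m=m] Dq_nonneg[OF g', where x="real m" and y="real m + s" and S=S and m=m] x in auto)
    thus ?thesis using E rs abs_ge_self[of a] B0 g gB by argo
  qed
  have highF: "C \<le> Fs S (real m + g)"
  proof -
    have x: "\<bar>real m + g - real m\<bar> \<le> g" using g by simp
    have E: "Fs S (real m + g) - C = - (r / g) + a + g * Dq S m (real m) (real m + g)"
      using formE[OF x] unfolding r_def a_def by simp
    show ?thesis using E Dbig[OF x] a unfolding r_def a_def by linarith
  qed
  have cont: "continuous_on {real m + s .. real m + g} (Fs S)"
    by (rule Fcont) (use s0 sg g in auto)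
  obtain l where l: "real m + s \<le> l" "l \<le> real m + g" "Fs S l = C"
    using IVT'[OF lowF highF _ cont] sg g by auto
  define u where "u = l - real m"
  have u: "0 < u" "u \<le> g" using l s0 unfolding u_def by auto
  have x: "\<bar>l - real m\<bar> \<le> g" using u unfolding u_def by simp
  define D where "D = Dq S m (real m) l"
  have neg: "real (r2 m) / (real m - l) = - (real (r2 m) / (l - real m))"
    by (metis minus_diff_eq divide_minus_right)
  have E: "0 = - (r / u) + a + u * D"
    using formE[OF x] l(3) neg unfolding r_def a_def u_def D_def by simp
  have Du: "D * u^2 \<le> r + u/10"
  proof -
    have ur: "u * (r / u) = r" using u by simp
    have "0 = u * (- (r / u) + a + u * D)" using E by simp
    also have "\<dots> = - r + a * u + D * u^2" using ur by (simp add: algebra_simps power2_eq_square)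
    finally have "D * u^2 = r - a * u" by linarith
    moreover have "- a * u \<le> u / 10" using a u unfolding a_def by (simp add: mult_right_mono)
    ultimately show ?thesis by linarith
  qed
  have H: "((1-g)/(1+g))^2 * Hs S m l \<le> D" unfolding D_def
    by (rule Dq_lowerH[OF g']) (use x g in auto)
  have "Hs S m l \<le> (1 + 6*g) * r / u^2" by (rule final_bound[OF g' r0 u Du H])
  moreover have "u^2 = (real m - l)^2" unfolding u_def by (simp add: power2_commute)
  ultimately show ?thesis using l s0 unfolding r_def by (intro exI[of _ l]) auto
qed

lemma left_side:
  assumes a: "Fs S (real m) - C \<le> 1/10"
  shows "\<exists>l. real m - g \<le> l \<and> l < real m \<and> Fs S l = C \<and> Hs S m l \<le> (1 + 6*g) * real (r2 m) / (real m - l)^2"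
proof -
  define r where "r = real (r2 m)"
  define a where "a = Fs S (real m) - C"
  define B where "B = 4 * Hs S m (real m)"
  have B0: "B \<ge> 0" unfolding B_def
    using Dq_nonneg[OF g', where x="real m" and y="real m" and S=S and m=m] Dq_upper[OF g', where x="real m" and y="real m" and S=S and m=m] g by simp
  define s where "s = min (g/2) (r / (2 * (\<bar>a\<bar> + g * B + 1)))"
  have gB: "0 \<le> g * B" using g B0 by simp
  have den: "2 * (\<bar>a\<bar> + g * B + 1) > 0" using B0 g by (simp add: add_nonneg_pos)
  have r0: "r \<ge> 1" using r1 unfolding r_def .
  have s0: "s > 0" unfolding s_def using g den r0 by simp
  have sg: "s \<le> g/2" unfolding s_def by (rule min.cobounded1)
  have s2: "s \<le> r / (2 * (\<bar>a\<bar> + g * B + 1))" unfolding s_def by simp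
  have rs: "r / s \<ge> 2 * (\<bar>a\<bar> + g * B + 1)" using s2 s0 den by (simp add: field_simps)
  have highF: "C \<le> Fs S (real m - s)"
  proof -
    have x: "\<bar>real m - s - real m\<bar> \<le> g" using s0 sg g by simp
    have E: "Fs S (real m - s) - C = r / s + a - s * Dq S m (real m) (real m - s)"
      using formE[OF x] unfolding r_def a_def by simp
    have "s * Dq S m (real m) (real m - s) \<le> g * B"
      unfolding B_def
      by (rule mult_mono) (use sg g s0 Dq_upper[OF g', where x="real m" and y="real m - s" and S=S and m=m] Dq_nonneg[OF g', where x="real m" and y="real m - s" and S=S and m=m] x in auto)
    thus ?thesis using E rs abs_ge_minus_self[of a] B0 g gB by (smt (verit))
  qed
  have lowF: "Fs S (real m - g) \<le> C"
  proof -
    have x: "\<bar>real m - g - real m\<bar> \<le> g" using g by simp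
    have E: "Fs S (real m - g) - C = r / g + a - g * Dq S m (real m) (real m - g)"
      using formE[OF x] unfolding r_def a_def by simp
    show ?thesis using E Dbig[OF x] a unfolding r_def a_def by linarith
  qed
  have cont: "continuous_on {real m - g .. real m - s} (Fs S)"
    by (rule Fcont) (use s0 sg g in auto)
  obtain l where l: "real m - g \<le> l" "l \<le> real m - s" "Fs S l = C"
    using IVT'[OF lowF highF _ cont] sg g by auto
  define u where "u = real m - l"
  have u: "0 < u" "u \<le> g" using l s0 unfolding u_def by auto
  have x: "\<bar>l - real m\<bar> \<le> g" using u unfolding u_def by simp
  define D where "D = Dq S m (real m) l"
  have mm: "(l - real m) * Dq S m (real m) l = - ((real m - l) * Dq S m (real m) l)"
    by (simp add: algebra_simps)
  have E: "0 = r / u + a - u * D"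
    using formE[OF x] l(3) mm unfolding r_def a_def u_def D_def by linarith
  have Du: "D * u^2 \<le> r + u/10"
  proof -
    have ur: "u * (r / u) = r" using u by simp
    have "0 = u * (r / u + a - u * D)" using E by simp
    also have "\<dots> = r + a * u - D * u^2" using ur by (simp add: algebra_simps power2_eq_square)
    finally have "D * u^2 = r + a * u" by linarith
    moreover have "a * u \<le> u / 10" using a u unfolding a_def by (simp add: mult_right_mono)
    ultimately show ?thesis by linarith
  qed
  have H: "((1-g)/(1+g))^2 * Hs S m l \<le> D" unfolding D_def
    by (rule Dq_lowerH[OF g']) (use x g in auto)
  have "Hs S m l \<le> (1 + 6*g) * r / u^2" by (rule final_bound[OF g' r0 u Du H])
  moreover have "u^2 = (real m - l)^2" unfolding u_def by simp
  ultimately show ?thesis using l s0 unfolding r_def by (intro exI[of _ l]) auto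
qed

end



lemma count18:
  fixes t :: real and m :: nat
  defines "E \<equiv> {n::nat. t - 3 \<le> \<bar>real n - real m\<bar> \<and> \<bar>real n - real m\<bar> < t + 6}"
  shows "finite E \<and> card E \<le> 18"
proof -
  define j where "j = \<lceil>t - 3\<rceil>"
  define K where "K = {j..j+8} \<union> {-(j+8)..-j}"
  have sub: "E \<subseteq> (\<lambda>k. nat (int m + k)) ` K"
  proof
    fix n assume "n \<in> E"
    hence n: "t - 3 \<le> \<bar>real n - real m\<bar>" "\<bar>real n - real m\<bar> < t + 6" unfolding E_def by auto
    define k where "k = int n - int m"
    have kk: "real_of_int \<bar>k\<bar> = \<bar>real n - real m\<bar>" unfolding k_def by simp
    have "t - 3 \<le> real_of_int \<bar>k\<bar>" using n(1) kk by simp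
    hence k1: "j \<le> \<bar>k\<bar>" unfolding j_def by (subst ceiling_le_iff)
    have "real_of_int \<bar>k\<bar> < real_of_int j + 9" using n(2) kk unfolding j_def
      using le_of_int_ceiling[of "t-3"] by linarith
    hence k2: "\<bar>k\<bar> \<le> j + 8" by linarith
    have "k \<in> K" unfolding K_def using k1 k2 by (cases "k \<ge> 0") auto
    moreover have "n = nat (int m + k)" unfolding k_def by simp
    ultimately show "n \<in> (\<lambda>k. nat (int m + k)) ` K" by blast
  qed
  have fK: "finite K" unfolding K_def by simp
  have "card K \<le> card {j..j+8} + card {-(j+8)..-j}" unfolding K_def by (rule card_Un_le)
  also have "\<dots> = 18" by simp
  finally have cK: "card K \<le> 18" .
  have "card E \<le> card ((\<lambda>k. nat (int m + k)) ` K)" by (rule card_mono) (use fK sub in auto)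
  also have "\<dots> \<le> card K" by (rule card_image_le[OF fK])
  finally show ?thesis using cK finite_subset[OF sub] fK by auto
qed

lemma powr_shift:
  fixes m m' :: nat and eta :: real
  assumes "0 < eta" "eta \<le> 1" "0 < m" "m \<le> m'" "m' \<le> m + 3" "real m powr eta \<le> real m"
  shows "real m' powr eta \<le> real m powr eta + 3"
proof -
  define q where "q = real m' / real m"
  have mpos: "real m > 0" using assms by simp
  have q1: "q \<ge> 1" unfolding q_def using assms by simp
  have eq: "real m' = real m * q" unfolding q_def using mpos by simp
  have "real m' powr eta = real m powr eta * q powr eta" unfolding eq
    using mpos q1 by (simp add: powr_mult)
  also have "\<dots> \<le> real m powr eta * q"
  proof -
    have "q powr eta \<le> q powr 1" by (rule powr_mono) (use assms q1 in auto)
    thus ?thesis using q1 by (simp add: mult_left_mono)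
  qed
  also have "\<dots> = real m powr eta + (real m' - real m) * (real m powr eta / real m)"
    unfolding q_def using mpos by (simp add: field_simps)
  also have "\<dots> \<le> real m powr eta + 3 * 1"
  proof -
    have a: "real m' - real m \<le> 3" "0 \<le> real m' - real m" using assms by auto
    have b: "real m powr eta / real m \<le> 1" using assms mpos by simp
    have "(real m' - real m) * (real m powr eta / real m) \<le> 3 * 1"
      by (rule mult_mono) (use a b in auto)
    thus ?thesis by simp
  qed
  finally show ?thesis by simp
qed



lemma tm_edge_bound:
  fixes t :: real and m n :: nat
  assumes t6: "t \<ge> 12" and tm: "t + 12 \<le> real m / 2"
    and n1: "t - 3 \<le> \<bar>real n - real m\<bar>" and n2: "\<bar>real n - real m\<bar> < t + 6"
  shows "\<bar>tm n (real m)\<bar> \<le> 36 * sqrt (real m) / t"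
proof -
  have tpos: "t > 0" using t6 by simp
  have tlm: "t \<le> real m" using tm t6 by simp
  have d: "\<bar>real n - real m\<bar> \<ge> t / 2" using n1 t6 by linarith
  have nlo: "real n \<ge> real m / 2" using n2 tm by linarith
  have nhi: "real n \<le> 2 * real m" using n2 tm by linarith
  have mpos: "real m > 0" using tm t6 by linarith
  have npos: "real n > 0" using nlo mpos by linarith
  have f1: "1 / \<bar>real n - real m\<bar> \<le> 2 / t"
  proof -
    have "1 / \<bar>real n - real m\<bar> \<le> 1 / (t/2)" by (rule frac_le) (use d tpos in auto)
    thus ?thesis by simp
  qed
  have f2: "real n / ((real n)^2 + 1) \<le> 2 / t"
  proof -
    have "real n / ((real n)^2 + 1) \<le> real n / (real n)^2"
    proof (rule divide_left_mono)
      have h1: "(real n)^2 + 1 > 0" by (smt (verit) zero_le_power2)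
      have h2: "(real n)^2 > 0" using npos by simp
      show "0 < ((real n)^2 + 1) * (real n)^2" by (rule mult_pos_pos[OF h1 h2])
    qed (use npos in auto)
    also have "\<dots> = 1 / real n" using npos by (simp add: power2_eq_square)
    also have "\<dots> \<le> 2 / real m" using nlo mpos npos by (simp add: field_simps)
    also have "\<dots> \<le> 2 / t" using tlm tpos by (simp add: frac_le)
    finally show ?thesis .
  qed
  have f3: "\<bar>1 / (real n - real m) - real n / ((real n)^2 + 1)\<bar> \<le> 4 / t"
  proof -
    have "\<bar>1 / (real n - real m) - real n / ((real n)^2 + 1)\<bar>
        \<le> \<bar>1 / (real n - real m)\<bar> + \<bar>real n / ((real n)^2 + 1)\<bar>" by (rule abs_triangle_ineq4)
    also have "\<dots> = 1 / \<bar>real n - real m\<bar> + real n / ((real n)^2 + 1)" using npos by simp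
    finally show ?thesis using f1 f2 by simp
  qed
  have r: "real (r2 n) \<le> 9 * sqrt (real m)"
  proof -
    have "n \<ge> 1" using npos by simp
    hence "real (r2 n) \<le> 6 * sqrt (real n)" by (rule r2_bound6)
    also have "\<dots> \<le> 6 * sqrt (2 * real m)" using nhi by simp
    also have "\<dots> = 6 * sqrt 2 * sqrt (real m)" by (simp add: real_sqrt_mult)
    also have "\<dots> \<le> 9 * sqrt (real m)"
    proof -
      have "sqrt 2 \<le> 3/2" by (rule real_le_lsqrt) (auto simp: power2_eq_square)
      thus ?thesis by (simp add: mult_right_mono)
    qed
    finally show ?thesis .
  qed
  have "\<bar>tm n (real m)\<bar> = real (r2 n) * \<bar>1 / (real n - real m) - real n / ((real n)^2 + 1)\<bar>"
    unfolding tm_def by (simp add: abs_mult)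
  also have "\<dots> \<le> 9 * sqrt (real m) * (4 / t)"
    by (rule mult_mono[OF r f3]) auto
  finally show ?thesis by simp
qed

lemma edge:
  fixes m m' :: nat and eta :: real
  defines "t \<equiv> real m powr eta"
  assumes eta: "0 < eta" "eta \<le> 1" and t6: "t \<ge> 12" and tm: "t + 12 \<le> real m / 2"
    and ts: "3300 * sqrt (real m) \<le> t" and mm: "m < m'" "m' \<le> m + 3"
  defines "A \<equiv> {n \<in> N2. \<bar>real n - real m\<bar> < t}"
    and "B \<equiv> {n \<in> N2. \<bar>real n - real m'\<bar> < real m' powr eta}"
  shows "\<bar>Fs A (real m) - Fs B (real m)\<bar> \<le> 1/5"
proof -
  define t' where "t' = real m' powr eta"
  have tlm: "t \<le> real m" using tm t6 by simp
  have tt1: "t \<le> t'" unfolding t_def t'_def by (rule powr_mono2) (use eta mm in auto)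
  have tt2: "t' \<le> t + 3" unfolding t_def t'_def
    by (rule powr_shift) (use eta mm tlm t6 in \<open>auto simp: t_def\<close>)
  have finA: "finite A" by (rule finite_subset[of _ "{..2*m+3}"]) (use tlm in \<open>auto simp: A_def\<close>)
  have mm': "real m' \<le> real m + 3" using mm by simp
  have finB: "finite B"
  proof (rule finite_subset[of _ "{..3*m+6}"])
    show "B \<subseteq> {..3*m+6}"
    proof
      fix x assume "x \<in> B"
      hence "\<bar>real x - real m'\<bar> < t'" unfolding B_def t'_def by auto
      hence "real x \<le> real (3*m+6)" using tt2 tlm mm' by simp
      thus "x \<in> {..3*m+6}" by (simp only: of_nat_le_iff atMost_iff)
    qed
  qed simp
  define E where "E = {n::nat. t - 3 \<le> \<bar>real n - real m\<bar> \<and> \<bar>real n - real m\<bar> < t + 6}"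
  have subE: "(A - B) \<union> (B - A) \<subseteq> E"
  proof
    fix n assume "n \<in> (A - B) \<union> (B - A)"
    thus "n \<in> E"
    proof
      assume n: "n \<in> A - B"
      hence "\<bar>real n - real m\<bar> < t" "\<bar>real n - real m'\<bar> \<ge> t'" unfolding A_def B_def t'_def by auto
      thus "n \<in> E" unfolding E_def using tt1 mm by auto
    next
      assume n: "n \<in> B - A"
      hence "\<bar>real n - real m\<bar> \<ge> t" "\<bar>real n - real m'\<bar> < t'" unfolding A_def B_def t'_def by auto
      thus "n \<in> E" unfolding E_def using tt2 mm by auto
    qed
  qed
  have cE: "finite E" "card E \<le> 18" using count18[of t m] unfolding E_def by auto
  have bnd: "\<bar>tm n (real m)\<bar> \<le> 36 * sqrt (real m) / t" if "n \<in> E" for n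
    by (rule tm_edge_bound[OF t6 tm]) (use that in \<open>auto simp: E_def\<close>)
  have FA: "Fs A (real m) = sum (\<lambda>n. tm n (real m)) (A \<inter> B) + sum (\<lambda>n. tm n (real m)) (A - B)"
    unfolding Fs_def using finA by (simp add: sum.Int_Diff)
  have FB: "Fs B (real m) = sum (\<lambda>n. tm n (real m)) (A \<inter> B) + sum (\<lambda>n. tm n (real m)) (B - A)"
    unfolding Fs_def using finB sum.Int_Diff[OF finB, of _ A] by (simp add: Int_commute)
  have "\<bar>Fs A (real m) - Fs B (real m)\<bar> = \<bar>sum (\<lambda>n. tm n (real m)) (A - B) - sum (\<lambda>n. tm n (real m)) (B - A)\<bar>"
    using FA FB by simp
  also have "\<dots> \<le> \<bar>sum (\<lambda>n. tm n (real m)) (A - B)\<bar> + \<bar>sum (\<lambda>n. tm n (real m)) (B - A)\<bar>"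
    by (rule abs_triangle_ineq4)
  also have "\<dots> \<le> sum (\<lambda>n. \<bar>tm n (real m)\<bar>) (A - B) + sum (\<lambda>n. \<bar>tm n (real m)\<bar>) (B - A)"
    by (intro add_mono sum_abs)
  also have "\<dots> = sum (\<lambda>n. \<bar>tm n (real m)\<bar>) ((A - B) \<union> (B - A))"
    by (rule sum.union_disjoint[symmetric]) (use finA finB in auto)
  also have "\<dots> \<le> sum (\<lambda>n. \<bar>tm n (real m)\<bar>) E"
    by (rule sum_mono2[OF cE(1) subE]) auto
  also have "\<dots> \<le> of_nat (card E) * (36 * sqrt (real m) / t)"
    by (rule sum_bounded_above) (rule bnd)
  also have "\<dots> \<le> 18 * (36 * sqrt (real m) / t)"
    by (rule mult_right_mono) (use cE(2) t6 in auto)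
  also have "\<dots> \<le> 1/5"
  proof -
    have "648 * sqrt (real m) \<le> t / 5" using ts real_sqrt_ge_zero[of "real m"] by linarith
    thus ?thesis using t6 by (simp add: field_simps)
  qed
  finally show ?thesis .
qed



lemma asympt:
  fixes eta :: real
  assumes eta: "131/146 < eta" "eta < 1"
  shows "\<exists>N::nat. \<forall>m\<ge>N. real m powr eta \<ge> 12 \<and> real m powr eta + 12 \<le> real m / 2
           \<and> 3300 * sqrt (real m) \<le> real m powr eta"
proof -
  define N0 :: real where "N0 = max (3300 powr 3) (max (4 powr (1/(1-eta))) 100)"
  define N where "N = nat \<lceil>N0\<rceil>"
  have "\<forall>m\<ge>N. real m powr eta \<ge> 12 \<and> real m powr eta + 12 \<le> real m / 2
           \<and> 3300 * sqrt (real m) \<le> real m powr eta"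
  proof (intro allI impI)
    fix m assume "m \<ge> N"
    hence mN: "real m \<ge> N0" unfolding N_def by linarith
    have m100: "real m \<ge> 100" using mN unfolding N0_def by linarith
    have m1: "real m \<ge> 1" using m100 by simp
    have mpos: "real m > 0" using m100 by simp
    define t where "t = real m powr eta"
    have t56: "real m powr (5/6) \<le> t" unfolding t_def by (rule powr_mono) (use eta m1 in auto)
    have split: "real m powr (5/6) = sqrt (real m) * real m powr (1/3)"
    proof -
      have "real m powr (5/6) = real m powr (1/2 + 1/3)" by simp
      also have "\<dots> = real m powr (1/2) * real m powr (1/3)" by (rule powr_add)
      finally show ?thesis using mpos by (simp add: powr_half_sqrt)
    qed
    have c3: "real m powr (1/3) \<ge> 3300"
    proof -
      have "(3300 powr 3) powr (1/3) \<le> real m powr (1/3)"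
        by (rule powr_mono2) (use mN in \<open>auto simp: N0_def\<close>)
      moreover have "(3300 powr 3) powr (1/3) = (3300::real)" by (simp add: powr_powr)
      ultimately show ?thesis by simp
    qed
    have s1: "sqrt (real m) \<ge> 1" using m1 by simp
    have h3: "3300 * sqrt (real m) \<le> t"
    proof -
      have "3300 * sqrt (real m) \<le> sqrt (real m) * real m powr (1/3)"
        using c3 s1 by (simp add: mult.commute mult_left_mono)
      thus ?thesis using t56 split by linarith
    qed
    have h1: "t \<ge> 12" using h3 s1 by linarith
    have c4: "real m powr (1 - eta) \<ge> 4"
    proof -
      have "(4 powr (1/(1-eta))) powr (1-eta) \<le> real m powr (1-eta)"
        by (rule powr_mono2) (use mN eta in \<open>auto simp: N0_def\<close>)
      moreover have "(4 powr (1/(1-eta))) powr (1-eta) = (4::real)" using eta by (simp add: powr_powr)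
      ultimately show ?thesis by simp
    qed
    have "t * real m powr (1 - eta) = real m"
      unfolding t_def using mpos by (simp add: powr_add[symmetric])
    moreover have "t * 4 \<le> t * real m powr (1 - eta)" by (rule mult_left_mono) (use c4 h1 in auto)
    ultimately have "t * 4 \<le> real m" by simp
    hence h2: "t + 12 \<le> real m / 2" using m100 by linarith
    show "real m powr eta \<ge> 12 \<and> real m powr eta + 12 \<le> real m / 2
           \<and> 3300 * sqrt (real m) \<le> real m powr eta" using h1 h2 h3 unfolding t_def by auto
  qed
  thus ?thesis by blast
qed

lemma nplus_left: "m \<in> N2 \<Longrightarrow> real m - 1 < l \<Longrightarrow> l < real m \<Longrightarrow> nplus l = m"
  unfolding nplus_def
proof (rule Least_equality)
  assume "m \<in> N2" "real m - 1 < l" "l < real m"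
  thus "m \<in> N2 \<and> l < real m" by simp
  fix y assume "y \<in> N2 \<and> l < real y"
  hence "real m - 1 < real y" using \<open>real m - 1 < l\<close> by linarith
  thus "m \<le> y" by linarith
qed

lemma nplus_right: "real m < l \<Longrightarrow> l < real m + 1 \<Longrightarrow> nplus l = nplus (real m + 1/2)"
proof -
  assume a: "real m < l" "l < real m + 1"
  have "(\<lambda>n. n \<in> N2 \<and> l < real n) = (\<lambda>n. n \<in> N2 \<and> real m + 1/2 < real n)"
  proof (intro ext)
    fix n :: nat
    have "(l < real n) = (m + 1 \<le> n)" using a by linarith
    moreover have "(real m + 1/2 < real n) = (m + 1 \<le> n)" by linarith
    ultimately show "(n \<in> N2 \<and> l < real n) = (n \<in> N2 \<and> real m + 1/2 < real n)" by simp
  qed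
  thus ?thesis unfolding nplus_def by simp
qed

lemma nplus_right_bounds:
  assumes "m + 3 \<in> N2"
  shows "m < nplus (real m + 1/2) \<and> nplus (real m + 1/2) \<le> m + 3"
proof -
  have ex: "(m+3) \<in> N2 \<and> real m + 1/2 < real (m+3)" using assms by simp
  have "nplus (real m + 1/2) \<in> N2 \<and> real m + 1/2 < real (nplus (real m + 1/2))"
    unfolding nplus_def by (rule LeastI[where P="\<lambda>n. n \<in> N2 \<and> real m + 1/2 < real n", OF ex])
  hence "m < nplus (real m + 1/2)" by linarith
  moreover have "nplus (real m + 1/2) \<le> m + 3" unfolding nplus_def by (rule Least_le[where P="\<lambda>n. n \<in> N2 \<and> real m + 1/2 < real n", OF ex])
  ultimately show ?thesis by simp
qed

lemma Iset_eq: "nplus l = nplus l' \<Longrightarrow> Iset cpl eta l = Iset cpl eta l'"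
  unfolding Iset_def by (cases cpl) simp_all



lemma NewEigI: "l \<notin> real ` N2 \<Longrightarrow> Fs (Iset cpl eta l) l = C \<Longrightarrow> l \<in> NewEig cpl eta C"
  unfolding NewEig_def Fs_def tm_def by simp

lemma Hderiv_eq: "Hderiv cpl eta m l = Hs (Iset cpl eta l) m l"
  unfolding Hderiv_def Hs_def by simp

lemma notint: "real k - 1 < l \<Longrightarrow> l < real k \<Longrightarrow> l \<notin> real ` A"
proof
  assume a: "real k - 1 < l" "l < real k" "l \<in> real ` A"
  then obtain j where j: "l = real j" by auto
  have "real j < real k" using a j by simp
  hence "j < k" by simp
  moreover have "real k < real (j + 1)" using a j by simp
  hence "k < j + 1" by (simp only: of_nat_less_iff)
  ultimately show False by simp
qed

lemma notint2: "real k < l \<Longrightarrow> l < real k + 1 \<Longrightarrow> l \<notin> real ` A"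
proof
  assume a: "real k < l" "l < real k + 1" "l \<in> real ` A"
  then obtain j where j: "l = real j" by auto
  have "real k < real j" using a j by simp
  hence "k < j" by simp
  moreover have "real j < real (k + 1)" using a j by simp
  hence "j < k + 1" by (simp only: of_nat_less_iff)
  ultimately show False by simp
qed

lemma core:
  fixes cpl :: coupling and eta C g :: real and m :: nat
  assumes cS: "cpl = Strong \<longrightarrow> 131/146 < eta \<and> eta < 1"
    and g: "0 < g" "g < 1/10"
    and mN2: "m \<in> N2" and m2: "m \<ge> 1"
    and big: "real (r2 (m+3)) \<ge> 10 * real (r2 m) / g^2"
    and asy: "cpl = Strong \<longrightarrow> (real m powr eta \<ge> 12 \<and> real m powr eta + 12 \<le> real m / 2
           \<and> 3300 * sqrt (real m) \<le> real m powr eta)"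
  shows "\<exists>lam \<in> NewEig cpl eta C. \<bar>lam - real m\<bar> \<le> g \<and>
           Hderiv cpl eta m lam \<le> (1 + 6 * g) * real (r2 m) / (real m - lam)\<^sup>2"
proof -
  have r1: "real (r2 m) \<ge> 1" using mN2 unfolding N2_def by simp
  have "real (r2 (m+3)) > 0"
  proof -
    have "10 * real (r2 m) / g^2 > 0" using r1 g by simp
    thus ?thesis using big by linarith
  qed
  hence m3N: "m + 3 \<in> N2" unfolding N2_def by simp
  define SL where "SL = Iset cpl eta (real m - 1/2)"
  define SR where "SR = Iset cpl eta (real m + 1/2)"
  define m' where "m' = nplus (real m + 1/2)"
  have npL: "nplus (real m - 1/2) = m" by (rule nplus_left[OF mN2]) auto
  have mm: "m < m'" "m' \<le> m + 3" using nplus_right_bounds[OF m3N] unfolding m'_def by auto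
  have mem: "m \<in> SL \<and> m + 3 \<in> SL \<and> m \<in> SR \<and> m + 3 \<in> SR \<and> \<bar>Fs SL (real m) - Fs SR (real m)\<bar> \<le> 1/5"
  proof (cases cpl)
    case Weak
    thus ?thesis unfolding SL_def SR_def Iset_def using mN2 m3N by simp
  next
    case Strong
    define t where "t = real m powr eta"
    have eta: "131/146 < eta" "eta < 1" using cS Strong by auto
    have A: "t \<ge> 12" "t + 12 \<le> real m / 2" "3300 * sqrt (real m) \<le> t" using asy Strong unfolding t_def by auto
    have tt: "t \<le> real m' powr eta" unfolding t_def by (rule powr_mono2) (use eta mm in auto)
    have mm': "real m' \<le> real m + 3" "real m < real m'" using mm by auto
    have SLe: "SL = {n \<in> N2. \<bar>real n - real m\<bar> < t}" unfolding SL_def Iset_def t_def using Strong npL by simp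
    have SRe: "SR = {n \<in> N2. \<bar>real n - real m'\<bar> < real m' powr eta}"
      unfolding SR_def Iset_def m'_def using Strong by simp
    have e: "\<bar>Fs SL (real m) - Fs SR (real m)\<bar> \<le> 1/5" unfolding SLe SRe t_def
      by (rule edge) (use eta A mm in \<open>auto simp: t_def\<close>)
    have "m \<in> SL \<and> m + 3 \<in> SL \<and> m \<in> SR \<and> m + 3 \<in> SR"
      unfolding SLe SRe using mN2 m3N A tt mm' by auto
    thus ?thesis using e by simp
  qed
  have mS: "m \<in> SL" "m + 3 \<in> SL" "m \<in> SR" "m + 3 \<in> SR" using mem by auto
  have dif: "\<bar>Fs SL (real m) - Fs SR (real m)\<bar> \<le> 1/5" using mem by auto
  show ?thesis
  proof (cases "Fs SL (real m) - C \<le> 1/10")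
    case True
    obtain l where l: "real m - g \<le> l" "l < real m" "Fs SL l = C"
        "Hs SL m l \<le> (1 + 6*g) * real (r2 m) / (real m - l)^2"
      using left_side[OF g mS(1,2) r1 big True] by blast
    have l1: "real m - 1 < l" using l g by linarith
    have IL: "Iset cpl eta l = SL" unfolding SL_def
      by (rule Iset_eq) (use nplus_left[OF mN2 l1 l(2)] npL in simp)
    have "l \<in> NewEig cpl eta C" by (rule NewEigI) (use notint[OF l1 l(2)] IL l(3) in auto)
    moreover have "\<bar>l - real m\<bar> \<le> g" using l by auto
    moreover have "Hderiv cpl eta m l \<le> (1 + 6*g) * real (r2 m) / (real m - l)^2"
      unfolding Hderiv_eq IL by (rule l(4))
    ultimately show ?thesis by blast
  next
    case False
    hence a: "Fs SR (real m) - C \<ge> -1/10" using dif by linarith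
    obtain l where l: "real m < l" "l \<le> real m + g" "Fs SR l = C"
        "Hs SR m l \<le> (1 + 6*g) * real (r2 m) / (real m - l)^2"
      using right_side[OF g mS(3,4) r1 big a] by blast
    have l1: "l < real m + 1" using l g by linarith
    have IR: "Iset cpl eta l = SR" unfolding SR_def
      by (rule Iset_eq) (rule nplus_right[OF l(1) l1])
    have "l \<in> NewEig cpl eta C" by (rule NewEigI) (use notint2[OF l(1) l1] IR l(3) in auto)
    moreover have "\<bar>l - real m\<bar> \<le> g" using l by auto
    moreover have "Hderiv cpl eta m l \<le> (1 + 6*g) * real (r2 m) / (real m - l)^2"
      unfolding Hderiv_eq IR by (rule l(4))
    ultimately show ?thesis by blast
  qed
qed

theorem proposition5p1:
  "\<exists>K::real. \<forall>(cpl::coupling) (eta::real) (C::real) (gamma::real) (M::nat set).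
     (cpl = Strong \<longrightarrow> 131/146 < eta \<and> eta < 1) \<longrightarrow>
     0 < gamma \<longrightarrow> gamma < 1/10 \<longrightarrow> is_M_gamma gamma M \<longrightarrow>
     (\<exists>m0. \<forall>m \<in> M. m \<ge> m0 \<longrightarrow>
        (\<exists>lam \<in> NewEig cpl eta C. \<bar>lam - real m\<bar> \<le> gamma \<and>
           Hderiv cpl eta m lam \<le> (1 + K * gamma) * real (r2 m) / (real m - lam)\<^sup>2))"
proof (rule exI[of _ 6], intro allI impI)
  fix cpl :: coupling and eta C gamma :: real and M :: "nat set"
  assume cS: "cpl = Strong \<longrightarrow> 131/146 < eta \<and> eta < 1" and g0: "0 < gamma" and g1: "gamma < 1/10"
    and MM: "is_M_gamma gamma M"
  obtain N :: nat where N: "cpl = Strong \<longrightarrow> (\<forall>m\<ge>N. real m powr eta \<ge> 12 \<and> real m powr eta + 12 \<le> real m / 2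
           \<and> 3300 * sqrt (real m) \<le> real m powr eta)"
  proof (cases cpl)
    case Weak thus ?thesis using that by auto
  next
    case Strong
    then obtain N :: nat where "\<forall>m\<ge>N. real m powr eta \<ge> 12 \<and> real m powr eta + 12 \<le> real m / 2
           \<and> 3300 * sqrt (real m) \<le> real m powr eta" using asympt cS by blast
    thus ?thesis using that by auto
  qed
  show "\<exists>m0. \<forall>m \<in> M. m \<ge> m0 \<longrightarrow>
        (\<exists>lam \<in> NewEig cpl eta C. \<bar>lam - real m\<bar> \<le> gamma \<and>
           Hderiv cpl eta m lam \<le> (1 + 6 * gamma) * real (r2 m) / (real m - lam)\<^sup>2)"
  proof (intro exI[of _ N] ballI impI)
    fix m assume mM: "m \<in> M" and mN: "N \<le> m"
    have mN2: "m \<in> N2" using MM mM unfolding is_M_gamma_def by auto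
    have m1: "m \<ge> 1" using MM mM unfolding is_M_gamma_def by auto
    have big: "real (r2 (m+3)) \<ge> 10 * real (r2 m) / gamma^2" using MM mM unfolding is_M_gamma_def by auto
    show "\<exists>lam \<in> NewEig cpl eta C. \<bar>lam - real m\<bar> \<le> gamma \<and>
           Hderiv cpl eta m lam \<le> (1 + 6 * gamma) * real (r2 m) / (real m - lam)\<^sup>2"
      by (rule core[OF cS g0 g1 mN2 m1 big]) (use N mN in auto)
  qed
qed


end
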